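(* Let $(\Omega,\mathcal F,\mu)$ be a $\sigma$-finite measure space, $\mathcal P_>$ the set of $\mu$-a.s. strictly positive probability densities, and for $p\in\mathcal P_>$ let $H_p=L^2_0(p)=\{u: E_p[u^2]<\infty,\ E_p[u]=0\}$ with inner product $(u,v)\mapsto E_p[uv]$. For $p,q\in\mathcal P_>$ and $u\in H_p$ define $$U_p^q u=\sqrt{\tfrac pq}\,u-\Bigl(1+E_q\Bigl[\sqrt{\tfrac pq}\Bigr]\Bigr)^{-1}\Bigl(1+\sqrt{\tfrac pq}\Bigr)E_q\Bigl[\sqrt{\tfrac pq}\,u\Bigr].$$ Then: (1) $U_p^q$ is an isometry of $H_p$ onto $H_q$; (2) $U_q^p\circ U_p^q u=u$ for all $u\in H_p$, and the adjoint of $U_p^q$ (with respect to the inner products of $H_p$ and $H_q$) is $U_q^p$.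
   Context: $E_p[\cdot]$ denotes expectation with respect to the probability measure $p\cdot\mu$. *)

theory Defs
  imports "HOL-Analysis.Analysis"
begin

definition Ep :: "'a measure \<Rightarrow> ('a \<Rightarrow> real) \<Rightarrow> ('a \<Rightarrow> real) \<Rightarrow> real" where
  "Ep M p f = (\<integral>x. p x * f x \<partial>M)"

definition Ppos :: "'a measure \<Rightarrow> ('a \<Rightarrow> real) set" where
  "Ppos M = {p. p \<in> borel_measurable M \<and> (AE x in M. 0 < p x) \<and>
                 integrable M p \<and> (\<integral>x. p x \<partial>M) = 1}"

text \<open>H_p = L^2_0(p), represented by functions (not a.e.-classes).\<close>
definition Hp :: "'a measure \<Rightarrow> ('a \<Rightarrow> real) \<Rightarrow> ('a \<Rightarrow> real) set" where
  "Hp M p = {u. u \<in> borel_measurable M \<and> integrable M (\<lambda>x. p x * (u x)\<^sup>2) \<and>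
                integrable M (\<lambda>x. p x * u x) \<and> Ep M p u = 0}"

definition inner_p :: "'a measure \<Rightarrow> ('a \<Rightarrow> real) \<Rightarrow> ('a \<Rightarrow> real) \<Rightarrow> ('a \<Rightarrow> real) \<Rightarrow> real" where
  "inner_p M p u v = Ep M p (\<lambda>x. u x * v x)"

definition Utr :: "'a measure \<Rightarrow> ('a \<Rightarrow> real) \<Rightarrow> ('a \<Rightarrow> real) \<Rightarrow> ('a \<Rightarrow> real) \<Rightarrow> ('a \<Rightarrow> real)" where
  "Utr M p q u = (\<lambda>x. sqrt (p x / q x) * u x
      - inverse (1 + Ep M q (\<lambda>y. sqrt (p y / q y))) * (1 + sqrt (p x / q x))
        * Ep M q (\<lambda>y. sqrt (p y / q y) * u y))"

end

theory Submission imports Defs begin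

lemma amgm: fixes x y :: real assumes "0 \<le> x" "0 \<le> y" shows "sqrt (x*y) \<le> (x+y)/2"
proof -
  have "0 \<le> (sqrt x - sqrt y)^2" by simp
  hence "2 * (sqrt x * sqrt y) \<le> (sqrt x)^2 + (sqrt y)^2" by (simp add: power2_eq_square algebra_simps)
  thus ?thesis using assms by (simp add: real_sqrt_mult)
qed

lemma pw1: fixes P Q :: real assumes "P > 0" "Q > 0"
  shows "Q * sqrt (P/Q) = sqrt (P*Q)" "Q * (sqrt (P/Q) * sqrt (P/Q)) = P"
    "sqrt (P*Q) * sqrt (P/Q) = P" "sqrt (Q/P) * sqrt (P/Q) = 1" "P * sqrt (Q/P) = sqrt (P*Q)"
    "sqrt (Q*P) = sqrt (P*Q)" "sqrt (P*Q) * sqrt (Q/P) = Q"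
proof -
  have sq: "sqrt P * sqrt P = P" "sqrt Q * sqrt Q = Q" using assms by auto
  have nz: "sqrt P \<noteq> 0" "sqrt Q \<noteq> 0" using assms by auto
  show "Q * sqrt (P/Q) = sqrt (P*Q)" using sq nz by (simp add: real_sqrt_divide real_sqrt_mult field_simps)
  show "Q * (sqrt (P/Q) * sqrt (P/Q)) = P" using assms by simp
  show "sqrt (P*Q) * sqrt (P/Q) = P" using sq nz assms by (simp add: real_sqrt_divide real_sqrt_mult field_simps)
  show "sqrt (Q/P) * sqrt (P/Q) = 1" using assms by (simp add: real_sqrt_mult[symmetric])
  show "P * sqrt (Q/P) = sqrt (P*Q)" using sq nz by (simp add: real_sqrt_divide real_sqrt_mult field_simps)
  show "sqrt (Q*P) = sqrt (P*Q)" by (simp add: mult.commute)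
  show "sqrt (P*Q) * sqrt (Q/P) = Q" using sq nz assms by (simp add: real_sqrt_divide real_sqrt_mult field_simps)
qed

lemma poly1: fixes Q S R P U V K L :: real
  assumes "Q*S = R" "Q*(S*S) = P"
  shows "Q*((S*U - K*(1+S))*(S*V - L*(1+S))) = P*U*V - L*(R*U) - L*(P*U) - K*(R*V) - K*(P*V) + K*L*(Q + 2*R + P)"
proof -
  have "R = Q*S" "P = Q*(S*S)" using assms by auto
  thus ?thesis by (simp add: algebra_simps)
qed

lemma cs:
  fixes p q u v :: "'a \<Rightarrow> real"
  assumes m: "p \<in> borel_measurable M" "q \<in> borel_measurable M" "u \<in> borel_measurable M" "v \<in> borel_measurable M"
    and ae: "AE x in M. 0 < p x" "AE x in M. 0 < q x"
    and i: "integrable M (\<lambda>x. p x * (u x)\<^sup>2)" "integrable M (\<lambda>x. q x * (v x)\<^sup>2)"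
  shows "integrable M (\<lambda>x. sqrt (p x * q x) * u x * v x)"
proof (rule Bochner_Integration.integrable_bound[where f="\<lambda>x. (p x * (u x)\<^sup>2 + q x * (v x)\<^sup>2)/2"])
  show "integrable M (\<lambda>x. (p x * (u x)\<^sup>2 + q x * (v x)\<^sup>2)/2)" using i by auto
  show "(\<lambda>x. sqrt (p x * q x) * u x * v x) \<in> borel_measurable M" using m by measurable
  show "AE x in M. norm (sqrt (p x * q x) * u x * v x) \<le> norm ((p x * (u x)\<^sup>2 + q x * (v x)\<^sup>2)/2)"
    using ae
  proof eventually_elim
    case (elim x)
    have e: "norm (sqrt (p x * q x) * u x * v x) = sqrt ((p x * (u x)\<^sup>2) * (q x * (v x)\<^sup>2))"
      using elim by (simp add: real_sqrt_mult abs_mult)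
    have "sqrt ((p x * (u x)\<^sup>2) * (q x * (v x)\<^sup>2)) \<le> (p x * (u x)\<^sup>2 + q x * (v x)\<^sup>2)/2"
      using elim by (intro amgm) auto
    thus ?case using e elim by simp
  qed
qed


lemma Ppos_D:
  assumes "p \<in> Ppos M"
  shows "p \<in> borel_measurable M" "AE x in M. 0 < p x" "has_bochner_integral M p 1"
  using assms unfolding Ppos_def by (auto simp: has_bochner_integral_iff)

lemma Hp_D:
  assumes "u \<in> Hp M p"
  shows "u \<in> borel_measurable M" "integrable M (\<lambda>x. p x * (u x)\<^sup>2)" "has_bochner_integral M (\<lambda>x. p x * u x) 0"
  using assms unfolding Hp_def Ep_def by (auto simp: has_bochner_integral_iff)

lemma Utr_eq:
  assumes p: "p \<in> Ppos M" and q: "q \<in> Ppos M" and u: "u \<in> borel_measurable M"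
  shows "Utr M p q u = (\<lambda>x. sqrt (p x / q x) * u x
     - inverse (1 + (\<integral>x. sqrt (p x * q x) \<partial>M)) * (1 + sqrt (p x / q x)) * (\<integral>x. sqrt (p x * q x) * u x \<partial>M))"
proof -
  note P = Ppos_D[OF p] and Q = Ppos_D[OF q]
  have "Ep M q (\<lambda>y. sqrt (p y / q y)) = (\<integral>x. sqrt (p x * q x) \<partial>M)"
    unfolding Ep_def
  proof (rule integral_cong_AE)
    show "AE x in M. q x * sqrt (p x / q x) = sqrt (p x * q x)"
      using P(2) Q(2) by eventually_elim (simp add: pw1(1-5,7))
  qed (use P Q in auto)
  moreover have "Ep M q (\<lambda>y. sqrt (p y / q y) * u y) = (\<integral>x. sqrt (p x * q x) * u x \<partial>M)"
    unfolding Ep_def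
  proof (rule integral_cong_AE)
    show "AE x in M. q x * (sqrt (p x / q x) * u x) = sqrt (p x * q x) * u x"
      using P(2) Q(2) by eventually_elim (simp add: pw1(1-5,7) mult.assoc[symmetric])
  qed (use P Q u in auto)
  ultimately show ?thesis unfolding Utr_def by (intro ext) (simp only:)
qed


lemma poly2: fixes Q S R U K :: real assumes "Q*S = R"
  shows "Q*(S*U - K*(1+S)) = R*U - K*Q - K*R"
proof - have "R = Q*S" using assms by simp thus ?thesis by (simp add: algebra_simps) qed

lemma poly3: fixes P S R U K :: real assumes "R*S = P"
  shows "R*(S*U - K*(1+S)) = P*U - K*R - K*P"
proof - have "P = R*S" using assms by simp thus ?thesis by (simp add: algebra_simps) qed

lemma poly4: fixes T S U K :: real assumes "T*S = 1"
  shows "T*(S*U - K*(1+S)) + K*(1+T) = U"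
proof -
  have "T*(S*U - K*(1+S)) + K*(1+T) = (T*S)*U - K*T - K*(T*S) + K + K*T" by (simp add: algebra_simps)
  thus ?thesis using assms by simp
qed

lemma poly5: fixes Q S R U V K :: real assumes "Q*S = R"
  shows "Q*((S*U - K*(1+S))*V) = R*U*V - K*(Q*V) - K*(R*V)"
proof - have "R = Q*S" using assms by simp thus ?thesis by (simp add: algebra_simps) qed

lemma poly6: fixes P T R U V L :: real assumes "P*T = R"
  shows "P*(U*(T*V - L*(1+T))) = R*U*V - L*(P*U) - L*(R*U)"
proof - have "R = P*T" using assms by simp thus ?thesis by (simp add: algebra_simps) qed

lemma main:
  assumes p: "p \<in> Ppos M" and q: "q \<in> Ppos M"
  shows "(\<forall>u\<in>Hp M p. Utr M p q u \<in> Hp M q)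
    \<and> (\<forall>u\<in>Hp M p. \<forall>v\<in>Hp M p. inner_p M q (Utr M p q u) (Utr M p q v) = inner_p M p u v)
    \<and> (\<forall>u\<in>Hp M p. AE x in M. Utr M q p (Utr M p q u) x = u x)
    \<and> (\<forall>u\<in>Hp M p. \<forall>v\<in>Hp M q. inner_p M q (Utr M p q u) v = inner_p M p u (Utr M q p v))"
proof -
  note P = Ppos_D[OF p] and Q = Ppos_D[OF q]
  define r where "r = (\<lambda>x. sqrt (p x * q x))"
  define a where "a = (\<integral>x. r x \<partial>M)"
  define S where "S = (\<lambda>x. sqrt (p x / q x))"
  define T where "T = (\<lambda>x. sqrt (q x / p x))"
  define K where "K = (\<lambda>u. inverse (1 + a) * (\<integral>x. r x * u x \<partial>M))"
  have rm: "r \<in> borel_measurable M" unfolding r_def using P Q by auto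
  have Sm: "S \<in> borel_measurable M" unfolding S_def using P Q by auto
  have Tm: "T \<in> borel_measurable M" unfolding T_def using P Q by auto
  have pw: "AE x in M. q x * S x = r x \<and> q x * (S x * S x) = p x \<and> r x * S x = p x \<and> T x * S x = 1
      \<and> p x * T x = r x \<and> r x * T x = q x \<and> sqrt (p x * p x) = p x \<and> 0 \<le> r x"
    using P(2) Q(2) by eventually_elim (simp add: pw1(1-5,7) r_def S_def T_def)
  have ri: "integrable M r"
    using cs[OF P(1) Q(1) _ _ P(2) Q(2), of "\<lambda>_. 1" "\<lambda>_. 1"] P(3) Q(3)
    by (simp add: r_def has_bochner_integral_iff)
  hence rh: "has_bochner_integral M r a" unfolding a_def by (simp add: has_bochner_integral_iff)
  have "AE x in M. 0 \<le> r x" using pw by eventually_elim simp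
  hence "0 \<le> a" unfolding a_def by (rule integral_nonneg_AE)
  hence a1: "1 + a \<noteq> 0" by simp
  have UE: "\<And>u. u \<in> borel_measurable M \<Longrightarrow> Utr M p q u = (\<lambda>x. S x * u x - K u * (1 + S x))"
    by (simp add: Utr_eq[OF p q] K_def S_def r_def a_def mult_ac)
  have e: "\<And>x. sqrt (q x * p x) = r x" unfolding r_def by (simp add: mult.commute)
  have UE': "\<And>u. u \<in> borel_measurable M \<Longrightarrow> Utr M q p u = (\<lambda>x. T x * u x - K u * (1 + T x))"
    by (simp add: Utr_eq[OF q p] e K_def T_def a_def r_def mult_ac)
  have rup: "has_bochner_integral M (\<lambda>x. r x * u x) (\<integral>x. r x * u x \<partial>M)" if "u \<in> Hp M p" for u
    using cs[OF P(1) Q(1) Hp_D(1)[OF that] _ P(2) Q(2) Hp_D(2)[OF that], of "\<lambda>_. 1"] Q(3)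
    by (simp add: r_def has_bochner_integral_iff)
  have ruq: "has_bochner_integral M (\<lambda>x. r x * u x) (\<integral>x. r x * u x \<partial>M)" if "u \<in> Hp M q" for u
    using cs[OF P(1) Q(1) _ Hp_D(1)[OF that] P(2) Q(2) _ Hp_D(2)[OF that], of "\<lambda>_. 1"] P(3)
    by (simp add: r_def has_bochner_integral_iff)
  have Kc: "K u * (1 + a) = (\<integral>x. r x * u x \<partial>M)" for u
    unfolding K_def using a1 by simp
  have iso: "has_bochner_integral M (\<lambda>x. q x * (Utr M p q u x * Utr M p q v x)) (inner_p M p u v)"
    if u: "u \<in> Hp M p" and v: "v \<in> Hp M p" for u v
  proof -
    note U = Hp_D[OF u] and V = Hp_D[OF v]
    have "integrable M (\<lambda>x. sqrt (p x * p x) * u x * v x)"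
      by (rule cs[OF P(1) P(1) U(1) V(1) P(2) P(2) U(2) V(2)])
    hence "integrable M (\<lambda>x. p x * u x * v x)"
      by (rule integrable_cong_AE_imp) (use P U V pw in \<open>auto elim!: eventually_mono\<close>)
    hence puv: "has_bochner_integral M (\<lambda>x. p x * u x * v x) (inner_p M p u v)"
      unfolding inner_p_def Ep_def by (simp add: has_bochner_integral_iff mult.assoc)
    have h: "has_bochner_integral M (\<lambda>x. p x * u x * v x - K v * (r x * u x) - K v * (p x * u x)
        - K u * (r x * v x) - K u * (p x * v x) + K u * K v * (q x + 2 * r x + p x))
        (inner_p M p u v - K v * (\<integral>x. r x * u x \<partial>M) - K v * 0 - K u * (\<integral>x. r x * v x \<partial>M) - K u * 0
          + K u * K v * (1 + 2 * a + 1))"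
      by (intro has_bochner_integral_add has_bochner_integral_diff has_bochner_integral_mult_right
          puv rup u v U(3) V(3) rh P(3) Q(3))
    have eq: "inner_p M p u v - K v * (\<integral>x. r x * u x \<partial>M) - K v * 0 - K u * (\<integral>x. r x * v x \<partial>M) - K u * 0
          + K u * K v * (1 + 2 * a + 1) = inner_p M p u v"
      unfolding Kc[symmetric] by (simp add: algebra_simps)
    from h have h2: "has_bochner_integral M (\<lambda>x. p x * u x * v x - K v * (r x * u x) - K v * (p x * u x)
        - K u * (r x * v x) - K u * (p x * v x) + K u * K v * (q x + 2 * r x + p x)) (inner_p M p u v)" by (simp only: eq)
    show ?thesis
    proof (subst has_bochner_integral_cong_AE)
      show "AE x in M. q x * (Utr M p q u x * Utr M p q v x) = p x * u x * v x - K v * (r x * u x) - K v * (p x * u x)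
        - K u * (r x * v x) - K u * (p x * v x) + K u * K v * (q x + 2 * r x + p x)"
        using pw by eventually_elim (simp add: UE U(1) V(1) poly1)
    qed (use h2 P Q U V rm Sm UE in auto)
  qed
  have wm: "Utr M p q u \<in> borel_measurable M" if "u \<in> borel_measurable M" for u
    unfolding UE[OF that] using Sm that by auto
  have mem: "Utr M p q u \<in> Hp M q" if u: "u \<in> Hp M p" for u
  proof -
    note U = Hp_D[OF u]
    have i2: "integrable M (\<lambda>x. q x * (Utr M p q u x)\<^sup>2)"
      using integrable.intros[OF iso[OF u u]] by (simp add: power2_eq_square)
    have h: "has_bochner_integral M (\<lambda>x. r x * u x - K u * q x - K u * r x)
       ((\<integral>x. r x * u x \<partial>M) - K u * 1 - K u * a)"
      by (intro has_bochner_integral_diff has_bochner_integral_mult_right rup u rh Q(3))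
    have eq: "(\<integral>x. r x * u x \<partial>M) - K u * 1 - K u * a = 0"
      unfolding Kc[symmetric] by (simp add: algebra_simps)
    have h2: "has_bochner_integral M (\<lambda>x. q x * Utr M p q u x) 0"
    proof (subst has_bochner_integral_cong_AE)
      show "AE x in M. q x * Utr M p q u x = r x * u x - K u * q x - K u * r x"
        using pw by eventually_elim (simp add: UE U(1) poly2)
    qed (use h[unfolded eq] Q(1) U(1) rm wm[OF U(1)] in auto)
    show ?thesis unfolding Hp_def Ep_def
      using h2 i2 wm[OF U(1)] by (simp add: has_bochner_integral_iff)
  qed
  have inv: "AE x in M. Utr M q p (Utr M p q u) x = u x" if u: "u \<in> Hp M p" for u
  proof -
    note U = Hp_D[OF u]
    have h: "has_bochner_integral M (\<lambda>x. p x * u x - K u * r x - K u * p x)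
       (0 - K u * a - K u * 1)"
      by (intro has_bochner_integral_diff has_bochner_integral_mult_right U(3) rh P(3))
    have h2: "has_bochner_integral M (\<lambda>x. r x * Utr M p q u x) (0 - K u * a - K u * 1)"
    proof (subst has_bochner_integral_cong_AE)
      show "AE x in M. r x * Utr M p q u x = p x * u x - K u * r x - K u * p x"
        using pw by eventually_elim (simp add: UE U(1) poly3)
    qed (use h P(1) U(1) rm wm[OF U(1)] in auto)
    have "(\<integral>x. r x * Utr M p q u x \<partial>M) = - K u * (1 + a)"
      using has_bochner_integral_integral_eq[OF h2] by (simp add: algebra_simps)
    hence Kw: "K (Utr M p q u) = - K u"
      unfolding K_def using a1 by simp
    show ?thesis
      using pw by eventually_elim (simp add: UE' wm U(1) Kw, simp add: UE U(1) poly4)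
  qed
  have adj: "inner_p M q (Utr M p q u) v = inner_p M p u (Utr M q p v)"
    if u: "u \<in> Hp M p" and v: "v \<in> Hp M q" for u v
  proof -
    note U = Hp_D[OF u] and V = Hp_D[OF v]
    have ruv: "integrable M (\<lambda>x. r x * u x * v x)"
      using cs[OF P(1) Q(1) U(1) V(1) P(2) Q(2) U(2) V(2)] by (simp add: r_def)
    hence ruvh: "has_bochner_integral M (\<lambda>x. r x * u x * v x) (\<integral>x. r x * u x * v x \<partial>M)"
      by (simp add: has_bochner_integral_iff)
    have vm: "Utr M q p v \<in> borel_measurable M" unfolding UE'[OF V(1)] using Tm V(1) by auto
    have h: "has_bochner_integral M (\<lambda>x. r x * u x * v x - K u * (q x * v x) - K u * (r x * v x))
       ((\<integral>x. r x * u x * v x \<partial>M) - K u * 0 - K u * (\<integral>x. r x * v x \<partial>M))"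
      by (intro has_bochner_integral_diff has_bochner_integral_mult_right ruvh V(3) ruq v)
    have h2: "has_bochner_integral M (\<lambda>x. q x * (Utr M p q u x * v x))
       ((\<integral>x. r x * u x * v x \<partial>M) - K u * 0 - K u * (\<integral>x. r x * v x \<partial>M))"
    proof (subst has_bochner_integral_cong_AE)
      show "AE x in M. q x * (Utr M p q u x * v x) = r x * u x * v x - K u * (q x * v x) - K u * (r x * v x)"
        using pw by eventually_elim (simp add: UE U(1) poly5)
    qed (use h Q(1) V(1) U(1) rm wm[OF U(1)] in auto)
    have g: "has_bochner_integral M (\<lambda>x. r x * u x * v x - K v * (p x * u x) - K v * (r x * u x))
       ((\<integral>x. r x * u x * v x \<partial>M) - K v * 0 - K v * (\<integral>x. r x * u x \<partial>M))"
      by (intro has_bochner_integral_diff has_bochner_integral_mult_right ruvh U(3) rup u)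
    have g2: "has_bochner_integral M (\<lambda>x. p x * (u x * Utr M q p v x))
       ((\<integral>x. r x * u x * v x \<partial>M) - K v * 0 - K v * (\<integral>x. r x * u x \<partial>M))"
    proof (subst has_bochner_integral_cong_AE)
      show "AE x in M. p x * (u x * Utr M q p v x) = r x * u x * v x - K v * (p x * u x) - K v * (r x * u x)"
        using pw by eventually_elim (simp add: UE' V(1) poly6)
    qed (use g P(1) V(1) U(1) rm vm in auto)
    show ?thesis unfolding inner_p_def Ep_def
      using has_bochner_integral_integral_eq[OF h2] has_bochner_integral_integral_eq[OF g2]
      by (simp add: K_def)
  qed
  show ?thesis using mem inv adj iso has_bochner_integral_integral_eq[OF iso]
    by (auto simp: inner_p_def Ep_def)
qed

theorem proposition13:
  fixes M :: "'a measure" and p q :: "'a \<Rightarrow> real"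
  assumes "sigma_finite_measure M"
    and "p \<in> Ppos M" and "q \<in> Ppos M"
  shows "(\<forall>u\<in>Hp M p. Utr M p q u \<in> Hp M q)
    \<and> (\<forall>u\<in>Hp M p. \<forall>v\<in>Hp M p. inner_p M q (Utr M p q u) (Utr M p q v) = inner_p M p u v)
    \<and> (\<forall>w\<in>Hp M q. \<exists>u\<in>Hp M p. AE x in M. Utr M p q u x = w x)
    \<and> (\<forall>u\<in>Hp M p. AE x in M. Utr M q p (Utr M p q u) x = u x)
    \<and> (\<forall>u\<in>Hp M p. \<forall>v\<in>Hp M q. inner_p M q (Utr M p q u) v = inner_p M p u (Utr M q p v))"
proof -
  note A = main[OF assms(2,3)] and B = main[OF assms(3,2)]
  have "\<forall>w\<in>Hp M q. \<exists>u\<in>Hp M p. AE x in M. Utr M p q u x = w x"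
  proof
    fix w assume w: "w \<in> Hp M q"
    show "\<exists>u\<in>Hp M p. AE x in M. Utr M p q u x = w x"
      using B w by blast
  qed
  thus ?thesis using A by blast
qed

end
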